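(* Let $(X,\mathcal{A},\mu)$ be a $q$-measure space. Let $f_i\ge0$ be an increasing sequence of measurable functions on $X$ converging pointwise to $f$, and suppose there is a $\mu$-integrable function $g$ that $\mu$-dominates $f_i$ for every $i$. Then $f$ is $\mu$-integrable and $\lim_{i\to\infty}\int f_i\,d\mu=\int f\,d\mu$.
   Context: A $q$-measure space is a triple $(X,\mathcal{A},\mu)$ where $\mathcal{A}$ is a $\sigma$-algebra of subsets of $X$ and $\mu\colon\mathcal{A}\to[0,\infty)$ satisfies: (i) grade-2 additivity: $\mu(A\cup B\cup C)=\mu(A\cup B)+\mu(A\cup C)+\mu(B\cup C)-\mu(A)-\mu(B)-\mu(C)$ for mutually disjoint $A,B,C\in\mathcal{A}$; (ii) if $A_i\in\mathcal{A}$ is increasing then $\mu(\bigcup A_i)=\lim\mu(A_i)$; (iii) if $A_i\in\mathcal{A}$ is decreasing then $\mu(\bigcap A_i)=\lim\mu(A_i)$. For measurable $f$, $f$ is $\mu$-integrable if $\lambda\mapsto\mu(f^{-1}(\lambda,\infty))$ and $\lambda\mapsto\mu(f^{-1}(-\infty,-\lambda))$ have finite Lebesgue integral over $[0,\infty)$, and then $\int f\,d\mu=\int_0^\infty\mu(f^{-1}(\lambda,\infty))\,d\lambda-\int_0^\infty\mu(f^{-1}(-\infty,-\lambda))\,d\lambda$. For measurable $f,g$, $g$ $\mu$-dominates $f$ if $\mu(f^{-1}(\lambda,\infty))\le\mu(g^{-1}(\lambda,\infty))$ for all $\lambda\in\mathbb{R}$. *)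

theory Defs
  imports "HOL-Analysis.Analysis"
begin

definition q_measure_space :: "'a set \<Rightarrow> 'a set set \<Rightarrow> ('a set \<Rightarrow> real) \<Rightarrow> bool" where
  "q_measure_space X A \<mu> \<longleftrightarrow>
     sigma_algebra X A \<and>
     (\<forall>S\<in>A. 0 \<le> \<mu> S) \<and>
     (\<forall>B\<in>A. \<forall>C\<in>A. \<forall>D\<in>A. B \<inter> C = {} \<and> B \<inter> D = {} \<and> C \<inter> D = {} \<longrightarrow>
        \<mu> (B \<union> C \<union> D) = \<mu> (B \<union> C) + \<mu> (B \<union> D) + \<mu> (C \<union> D) - \<mu> B - \<mu> C - \<mu> D) \<and>
     (\<forall>S :: nat \<Rightarrow> 'a set. range S \<subseteq> A \<and> incseq S \<longrightarrow> (\<lambda>i. \<mu> (S i)) \<longlonglongrightarrow> \<mu> (\<Union>i. S i)) \<and>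
     (\<forall>S :: nat \<Rightarrow> 'a set. range S \<subseteq> A \<and> decseq S \<longrightarrow> (\<lambda>i. \<mu> (S i)) \<longlonglongrightarrow> \<mu> (\<Inter>i. S i))"

definition q_measurable :: "'a set \<Rightarrow> 'a set set \<Rightarrow> ('a \<Rightarrow> real) \<Rightarrow> bool" where
  "q_measurable X A f \<longleftrightarrow> f \<in> borel_measurable (sigma X A)"

definition q_integrable :: "'a set \<Rightarrow> 'a set set \<Rightarrow> ('a set \<Rightarrow> real) \<Rightarrow> ('a \<Rightarrow> real) \<Rightarrow> bool" where
  "q_integrable X A \<mu> f \<longleftrightarrow> q_measurable X A f \<and>
     set_integrable lborel {0..} (\<lambda>t. \<mu> {x\<in>X. f x > t}) \<and>
     set_integrable lborel {0..} (\<lambda>t. \<mu> {x\<in>X. f x < - t})"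

definition q_integral :: "'a set \<Rightarrow> ('a set \<Rightarrow> real) \<Rightarrow> ('a \<Rightarrow> real) \<Rightarrow> real" where
  "q_integral X \<mu> f =
     (LINT t:{0..}|lborel. \<mu> {x\<in>X. f x > t}) - (LINT t:{0..}|lborel. \<mu> {x\<in>X. f x < - t})"

definition q_dominates :: "'a set \<Rightarrow> ('a set \<Rightarrow> real) \<Rightarrow> ('a \<Rightarrow> real) \<Rightarrow> ('a \<Rightarrow> real) \<Rightarrow> bool" where
  "q_dominates X \<mu> g f \<longleftrightarrow> (\<forall>t::real. \<mu> {x\<in>X. f x > t} \<le> \<mu> {x\<in>X. g x > t})"

end

theory Submission
  imports Defs
begin

lemma qms_sa: "q_measure_space X A \<mu> \<Longrightarrow> sigma_algebra X A"
  unfolding q_measure_space_def by blast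

lemma qms_empty: assumes "q_measure_space X A \<mu>" shows "\<mu> {} = 0"
proof -
  have "{} \<in> A" using qms_sa[OF assms] by (simp add: sigma_algebra_iff2)
  then have "\<mu> ({} \<union> {} \<union> {}) = \<mu> ({} \<union> {}) + \<mu> ({} \<union> {}) + \<mu> ({} \<union> {}) - \<mu> {} - \<mu> {} - \<mu> {}"
    using assms unfolding q_measure_space_def by blast
  then show ?thesis by simp
qed

lemma qms_sets: assumes "q_measure_space X A \<mu>" "q_measurable X A h"
  shows "{x\<in>X. h x > t} \<in> A"
proof -
  have sa: "sigma_algebra X A" using qms_sa[OF assms(1)] .
  have "{w \<in> space (sigma X A). t < h w} \<in> sets (sigma X A)"
    using assms(2) unfolding q_measurable_def borel_measurable_iff_greater by blast
  then show ?thesis using sigma_algebra.space_measure_of_eq[OF sa] sigma_algebra.sets_measure_of_eq[OF sa]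
    by simp
qed

lemma qms_nonneg: assumes "q_measure_space X A \<mu>" "q_measurable X A h"
  shows "0 \<le> \<mu> {x\<in>X. h x > t}"
  using qms_sets[OF assms] assms(1) unfolding q_measure_space_def by blast

lemma qms_cont: assumes "q_measure_space X A \<mu>" "q_measurable X A h"
  and "decseq s" "s \<longlonglongrightarrow> t" "\<And>n. t \<le> s n"
  shows "(\<lambda>n. \<mu> {x\<in>X. h x > s n}) \<longlonglongrightarrow> \<mu> {x\<in>X. h x > t}"
proof -
  let ?S = "\<lambda>n. {x\<in>X. h x > s n}"
  have r: "range ?S \<subseteq> A" using qms_sets[OF assms(1,2)] by blast
  have inc: "incseq ?S" using assms(3) unfolding incseq_def decseq_def
    by (auto intro: le_less_trans)
  have u: "(\<Union>n. ?S n) = {x\<in>X. h x > t}"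
  proof safe
    fix x n assume "x \<in> X" "s n < h x" then show "t < h x" using assms(5)[of n] by linarith
  next
    fix x assume "x \<in> X" "t < h x"
    then have "eventually (\<lambda>n. s n < h x) sequentially"
      using order_tendstoD(2)[OF assms(4)] by blast
    then obtain n where "s n < h x" by (metis eventually_sequentially order_refl)
    then show "x \<in> (\<Union>n. ?S n)" using \<open>x \<in> X\<close> by blast
  qed
  show ?thesis using assms(1) r inc unfolding q_measure_space_def u[symmetric] by blast
qed

lemma qms_meas: assumes "q_measure_space X A \<mu>" "q_measurable X A h"
  shows "(\<lambda>t. \<mu> {x\<in>X. h x > t}) \<in> borel_measurable lborel"
proof (rule borel_measurable_LIMSEQ_real)
  fix n :: nat
  show "(\<lambda>t::real. \<mu> {x\<in>X. h x > real_of_int \<lceil>t * 2^n\<rceil> / 2^n}) \<in> borel_measurable lborel"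
  proof -
    have c: "(\<lambda>t::real. \<lceil>t * 2^n\<rceil>) \<in> lborel \<rightarrow>\<^sub>M count_space UNIV" by measurable
    show ?thesis
    using measurable_compose_countable[where f="\<lambda>k t. \<mu> {x\<in>X. h x > real_of_int k / 2^n}"
        and g="\<lambda>t::real. \<lceil>t * 2^n\<rceil>" and M=lborel and N=borel, OF _ c] by simp
  qed
next
  fix t :: real
  let ?s = "\<lambda>n::nat. real_of_int \<lceil>t * 2^n\<rceil> / 2^n"
  have ge: "t \<le> ?s n" for n by (simp add: field_simps)
  have le: "?s n \<le> t + (1/2)^n" for n
  proof -
    have "real_of_int \<lceil>t * 2^n\<rceil> \<le> t * 2^n + 1" by linarith
    then show ?thesis by (simp add: field_simps power_divide)
  qed
  have dec: "decseq ?s"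
  proof (rule decseq_SucI)
    fix n
    have "t * 2 ^ Suc n \<le> real_of_int (2 * \<lceil>t * 2^n\<rceil>)"
      using ge[of n] by (simp add: field_simps)
    then have "\<lceil>t * 2 ^ Suc n\<rceil> \<le> 2 * \<lceil>t * 2^n\<rceil>" by (simp add: ceiling_le_iff)
    then have "real_of_int \<lceil>t * 2 ^ Suc n\<rceil> \<le> 2 * real_of_int \<lceil>t * 2^n\<rceil>" by linarith
    then show "?s (Suc n) \<le> ?s n" by (simp add: field_simps)
  qed
  have lim: "?s \<longlonglongrightarrow> t"
  proof (rule tendsto_sandwich[of "\<lambda>_. t" _ _ "\<lambda>n. t + (1/2)^n"])
    show "eventually (\<lambda>n. t \<le> ?s n) sequentially" using ge by simp
    show "eventually (\<lambda>n. ?s n \<le> t + (1/2)^n) sequentially" using le by simp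
    show "(\<lambda>n. t) \<longlonglongrightarrow> t" by simp
    have "(\<lambda>n. t + (1/2::real)^n) \<longlonglongrightarrow> t + 0"
      by (intro tendsto_add tendsto_const LIMSEQ_power_zero) simp
    then show "(\<lambda>n. t + (1/2::real)^n) \<longlonglongrightarrow> t" by simp
  qed
  show "(\<lambda>n. \<mu> {x\<in>X. h x > ?s n}) \<longlonglongrightarrow> \<mu> {x\<in>X. h x > t}"
    by (rule qms_cont[OF assms dec lim ge])
qed


lemma neg_zero: assumes "q_measure_space X A \<mu>" "\<And>x. x \<in> X \<Longrightarrow> 0 \<le> h x"
  shows "(\<lambda>t::real. indicator {0..} t *\<^sub>R \<mu> {x\<in>X. h x < - t}) = (\<lambda>t. 0)"
proof
  fix t :: real
  show "indicator {0..} t *\<^sub>R \<mu> {x\<in>X. h x < - t} = 0"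
  proof (cases "0 \<le> t")
    case True
    have e: "{x\<in>X. h x < - t} = {}" using assms(2) True by force
    show ?thesis unfolding e qms_empty[OF assms(1)] by simp
  qed simp
qed

theorem theorem5p2:
  fixes X :: "'a set" and A :: "'a set set" and \<mu> :: "'a set \<Rightarrow> real"
    and fs :: "nat \<Rightarrow> 'a \<Rightarrow> real" and f g :: "'a \<Rightarrow> real"
  assumes "q_measure_space X A \<mu>"
    and "\<And>i. q_measurable X A (fs i)"
    and "\<And>i x. x \<in> X \<Longrightarrow> 0 \<le> fs i x"
    and "\<And>x. x \<in> X \<Longrightarrow> incseq (\<lambda>i. fs i x)"
    and "\<And>x. x \<in> X \<Longrightarrow> (\<lambda>i. fs i x) \<longlonglongrightarrow> f x"
    and "q_integrable X A \<mu> g"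
    and "\<And>i. q_dominates X \<mu> g (fs i)"
  shows "q_integrable X A \<mu> f \<and> (\<lambda>i. q_integral X \<mu> (fs i)) \<longlonglongrightarrow> q_integral X \<mu> f"
proof -
  note qms = assms(1)
  have sa: "sigma_algebra X A" using qms_sa[OF qms] .
  have mf: "q_measurable X A f"
    unfolding q_measurable_def
  proof (rule borel_measurable_LIMSEQ_real[where u=fs])
    fix x assume "x \<in> space (sigma X A)"
    then show "(\<lambda>i. fs i x) \<longlonglongrightarrow> f x" using assms(5) sigma_algebra.space_measure_of_eq[OF sa] by simp
  qed (use assms(2) q_measurable_def in blast)
  have fsle: "fs i x \<le> f x" if "x \<in> X" for i x
    using incseq_le[OF assms(4)[OF that] assms(5)[OF that]] .
  have fnn: "0 \<le> f x" if "x \<in> X" for x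
    using order_trans[OF assms(3) fsle] that by blast
  have pw: "(\<lambda>i. \<mu> {x\<in>X. fs i x > t}) \<longlonglongrightarrow> \<mu> {x\<in>X. f x > t}" for t
  proof -
    let ?S = "\<lambda>i. {x\<in>X. fs i x > t}"
    have r: "range ?S \<subseteq> A" using qms_sets[OF qms assms(2)] by blast
    have inc: "incseq ?S" unfolding incseq_def
      using assms(4) unfolding incseq_def by (auto intro: less_le_trans)
    have u: "(\<Union>i. ?S i) = {x\<in>X. f x > t}"
    proof safe
      fix x i assume "x \<in> X" "t < fs i x" then show "t < f x" using fsle[of x i] by linarith
    next
      fix x assume "x \<in> X" "t < f x"
      then have "eventually (\<lambda>i. t < fs i x) sequentially"
        using order_tendstoD(1)[OF assms(5)] by blast
      then obtain i where "t < fs i x" by (metis eventually_sequentially order_refl)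
      then show "x \<in> (\<Union>i. ?S i)" using \<open>x \<in> X\<close> by blast
    qed
    show ?thesis using qms r inc unfolding q_measure_space_def u[symmetric] by blast
  qed
  define F where "F = (\<lambda>i (t::real). indicator {0..} t *\<^sub>R \<mu> {x\<in>X. fs i x > t})"
  define G where "G = (\<lambda>t::real. indicator {0..} t *\<^sub>R \<mu> {x\<in>X. f x > t})"
  define W where "W = (\<lambda>t::real. indicator {0..} t *\<^sub>R \<mu> {x\<in>X. g x > t})"
  have mG: "G \<in> borel_measurable lborel" unfolding G_def
    using qms_meas[OF qms mf] by measurable
  have mF: "F i \<in> borel_measurable lborel" for i unfolding F_def
    using qms_meas[OF qms assms(2)[of i]] by measurable
  have iW: "integrable lborel W" using assms(6) unfolding W_def q_integrable_def set_integrable_def by blast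
  have lim: "AE t in lborel. (\<lambda>i. F i t) \<longlonglongrightarrow> G t"
    unfolding F_def G_def by (intro AE_I2 tendsto_scaleR tendsto_const pw)
  have bnd: "AE t in lborel. norm (F i t) \<le> W t" for i
  proof (intro AE_I2)
    fix t
    have "\<mu> {x\<in>X. fs i x > t} \<le> \<mu> {x\<in>X. g x > t}" using assms(7)[of i] unfolding q_dominates_def by blast
    then show "norm (F i t) \<le> W t" unfolding F_def W_def
      using qms_nonneg[OF qms assms(2)[of i], of t] by (auto simp: indicator_def)
  qed
  have iG: "integrable lborel G"
    by (rule integrable_dominated_convergence[OF mG mF iW lim bnd])
  have cv: "(\<lambda>i. integral\<^sup>L lborel (F i)) \<longlonglongrightarrow> integral\<^sup>L lborel G"
    by (rule integral_dominated_convergence[OF mG mF iW lim bnd])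
  have nf: "(\<lambda>t::real. indicator {0..} t *\<^sub>R \<mu> {x\<in>X. f x < - t}) = (\<lambda>t. 0)"
    using neg_zero[OF qms, of f] fnn by blast
  have nfs: "(\<lambda>t::real. indicator {0..} t *\<^sub>R \<mu> {x\<in>X. fs i x < - t}) = (\<lambda>t. 0)" for i
    using neg_zero[OF qms, of "fs i"] assms(3) by blast
  have "q_integrable X A \<mu> f"
    unfolding q_integrable_def set_integrable_def using mf iG nf G_def by simp
  moreover have "q_integral X \<mu> (fs i) = integral\<^sup>L lborel (F i)" for i
    unfolding q_integral_def set_lebesgue_integral_def nfs F_def by simp
  moreover have "q_integral X \<mu> f = integral\<^sup>L lborel G"
    unfolding q_integral_def set_lebesgue_integral_def nf G_def by simp
  ultimately show ?thesis using cv by simp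
qed

end
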